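(* The logic $\mathsf{sCond}_{\mathrm{ACL}}^{\mathbf{UC}}=\mathsf{ICK}\oplus(q\to(p\mathrel{\Box\!\!\!\rightarrow} q))\oplus(p\mathrel{\Box\!\!\!\rightarrow}((p\mathrel{\Box\!\!\!\rightarrow} q)\to q))$ is sound and complete with respect to the class of conditional frames $(X,\leq,\mathcal{R})$ such that for all $x,y\in X$ and $R_a\in\mathcal{R}$: $xR_ay$ implies $x\leq y$, and $x(R_a\circ\leq)y$ implies $y(R_a\circ\leq)y$.
   Context: Formulas: $\phi ::= p\mid\bot\mid\phi\wedge\phi\mid\phi\vee\phi\mid\phi\to\phi\mid\phi\mathrel{\Box\!\!\!\rightarrow}\phi$. $\mathsf{ICK}\oplus\Gamma$ is the smallest set containing intuitionistic propositional logic, $\Gamma$, $(p\mathrel{\Box\!\!\!\rightarrow}(q\wedge r))\leftrightarrow((p\mathrel{\Box\!\!\!\rightarrow} q)\wedge(p\mathrel{\Box\!\!\!\rightarrow} r))$ and $(p\mathrel{\Box\!\!\!\rightarrow}\top)\leftrightarrow\top$, closed under uniform substitution, modus ponens and congruence rules for both arguments of $\mathrel{\Box\!\!\!\rightarrow}$. A conditional frame is $(X,\leq,\mathcal{R})$, $(X,\leq)$ a nonempty preorder, $\mathcal{R}=\{R_a\mid a\text{ an upset}\}$ with $(\leq\circ R_a)\subseteq(R_a\circ\leq)$; valuations assign upsets to letters and $x\models\phi\mathrel{\Box\!\!\!\rightarrow}\psi$ iff every $y$ with $xR_{V(\phi)}y$ satisfies $\psi$. Relation composition $R\circ S$ relates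 $x$ to $z$ if $xRy$ and $ySz$ for some $y$. *)

theory Defs
  imports Main
begin

datatype form =
    Atom nat
  | Bot
  | And form form
  | Or form form
  | Imp form form
  | Cond form form

definition Top :: form where "Top = Imp Bot Bot"
definition Iff :: "form \<Rightarrow> form \<Rightarrow> form" where
  "Iff a b = And (Imp a b) (Imp b a)"

primrec subst :: "(nat \<Rightarrow> form) \<Rightarrow> form \<Rightarrow> form" where
  "subst s (Atom n) = s n"
| "subst s Bot = Bot"
| "subst s (And a b) = And (subst s a) (subst s b)"
| "subst s (Or a b) = Or (subst s a) (subst s b)"
| "subst s (Imp a b) = Imp (subst s a) (subst s b)"
| "subst s (Cond a b) = Cond (subst s a) (subst s b)"

abbreviation "P \<equiv> Atom 0"
abbreviation "Q \<equiv> Atom 1"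
abbreviation "R \<equiv> Atom 2"

text \<open>Intuitionistic propositional logic is given by a standard Hilbert system
  (axiom schemes + modus ponens); the remaining axioms are stated for the letters
  p, q, r and the logic is closed under uniform substitution, modus ponens and
  the congruence rules for both arguments of the conditional.\<close>

inductive_set ICK :: "form set \<Rightarrow> form set" for G :: "form set" where
  ipc1: "Imp a (Imp b a) \<in> ICK G"
| ipc2: "Imp (Imp a (Imp b c)) (Imp (Imp a b) (Imp a c)) \<in> ICK G"
| ipc3: "Imp (And a b) a \<in> ICK G"
| ipc4: "Imp (And a b) b \<in> ICK G"
| ipc5: "Imp a (Imp b (And a b)) \<in> ICK G"
| ipc6: "Imp a (Or a b) \<in> ICK G"
| ipc7: "Imp b (Or a b) \<in> ICK G"
| ipc8: "Imp (Imp a c) (Imp (Imp b c) (Imp (Or a b) c)) \<in> ICK G"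
| ipc9: "Imp Bot a \<in> ICK G"
| gam: "g \<in> G \<Longrightarrow> g \<in> ICK G"
| ax_and: "Iff (Cond P (And Q R)) (And (Cond P Q) (Cond P R)) \<in> ICK G"
| ax_top: "Iff (Cond P Top) Top \<in> ICK G"
| sub: "a \<in> ICK G \<Longrightarrow> subst s a \<in> ICK G"
| mp: "Imp a b \<in> ICK G \<Longrightarrow> a \<in> ICK G \<Longrightarrow> b \<in> ICK G"
| cong_l: "Iff a b \<in> ICK G \<Longrightarrow> Iff (Cond a c) (Cond b c) \<in> ICK G"
| cong_r: "Iff a b \<in> ICK G \<Longrightarrow> Iff (Cond c a) (Cond c b) \<in> ICK G"

definition sCond_ACL_UC :: "form set" where
  "sCond_ACL_UC = ICK {Imp Q (Cond P Q), Cond P (Imp (Cond P Q) Q)}"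

text \<open>A frame is given by a carrier X, a preorder le on X, and a family of
  relations R a indexed by the upsets a of (X, le). Values of R on non-upsets
  are irrelevant.\<close>

definition upset :: "'w set \<Rightarrow> ('w \<Rightarrow> 'w \<Rightarrow> bool) \<Rightarrow> 'w set \<Rightarrow> bool" where
  "upset X le a \<longleftrightarrow> a \<subseteq> X \<and> (\<forall>x\<in>a. \<forall>y\<in>X. le x y \<longrightarrow> y \<in> a)"

definition cond_frame :: "'w set \<Rightarrow> ('w \<Rightarrow> 'w \<Rightarrow> bool) \<Rightarrow> ('w set \<Rightarrow> 'w \<Rightarrow> 'w \<Rightarrow> bool) \<Rightarrow> bool" where
  "cond_frame X le Rel \<longleftrightarrow>
     X \<noteq> {} \<and>
     (\<forall>x\<in>X. le x x) \<and>
     (\<forall>x\<in>X. \<forall>y\<in>X. \<forall>z\<in>X. le x y \<longrightarrow> le y z \<longrightarrow> le x z) \<and>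
     (\<forall>a. upset X le a \<longrightarrow>
        (\<forall>x y. Rel a x y \<longrightarrow> x \<in> X \<and> y \<in> X) \<and>
        (\<forall>x y z. x \<in> X \<and> le x y \<and> Rel a y z \<longrightarrow> (\<exists>u. Rel a x u \<and> le u z)))"

primrec sat :: "'w set \<Rightarrow> ('w \<Rightarrow> 'w \<Rightarrow> bool) \<Rightarrow> ('w set \<Rightarrow> 'w \<Rightarrow> 'w \<Rightarrow> bool)
                 \<Rightarrow> (nat \<Rightarrow> 'w set) \<Rightarrow> 'w \<Rightarrow> form \<Rightarrow> bool" where
  "sat X le Rel V x (Atom n) = (x \<in> V n)"
| "sat X le Rel V x Bot = False"
| "sat X le Rel V x (And a b) = (sat X le Rel V x a \<and> sat X le Rel V x b)"
| "sat X le Rel V x (Or a b) = (sat X le Rel V x a \<or> sat X le Rel V x b)"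
| "sat X le Rel V x (Imp a b) =
     (\<forall>y\<in>X. le x y \<longrightarrow> sat X le Rel V y a \<longrightarrow> sat X le Rel V y b)"
| "sat X le Rel V x (Cond a b) =
     (\<forall>y. Rel {z\<in>X. sat X le Rel V z a} x y \<longrightarrow> sat X le Rel V y b)"

definition valid_frame :: "'w set \<Rightarrow> ('w \<Rightarrow> 'w \<Rightarrow> bool) \<Rightarrow> ('w set \<Rightarrow> 'w \<Rightarrow> 'w \<Rightarrow> bool) \<Rightarrow> form \<Rightarrow> bool" where
  "valid_frame X le Rel phi \<longleftrightarrow>
     (\<forall>V. (\<forall>n. upset X le (V n)) \<longrightarrow> (\<forall>x\<in>X. sat X le Rel V x phi))"

definition UC_frame :: "'w set \<Rightarrow> ('w \<Rightarrow> 'w \<Rightarrow> bool) \<Rightarrow> ('w set \<Rightarrow> 'w \<Rightarrow> 'w \<Rightarrow> bool) \<Rightarrow> bool" where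
  "UC_frame X le Rel \<longleftrightarrow> cond_frame X le Rel \<and>
     (\<forall>a. upset X le a \<longrightarrow>
        (\<forall>x\<in>X. \<forall>y\<in>X. Rel a x y \<longrightarrow> le x y) \<and>
        (\<forall>x\<in>X. \<forall>y\<in>X. (\<exists>u. Rel a x u \<and> le u y) \<longrightarrow> (\<exists>u. Rel a y u \<and> le u y)))"

end

theory Submission
  imports Defs
begin
lemma cf_refl0: "cond_frame X le Rel \<Longrightarrow> \<forall>x\<in>X. le x x"
  unfolding cond_frame_def by (elim conjE) assumption
lemma cf_trans0: "cond_frame X le Rel \<Longrightarrow> \<forall>x\<in>X. \<forall>y\<in>X. \<forall>z\<in>X. le x y \<longrightarrow> le y z \<longrightarrow> le x z"
  unfolding cond_frame_def by (elim conjE) assumption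
lemma cf_up0: "cond_frame X le Rel \<Longrightarrow> \<forall>a. upset X le a \<longrightarrow>
        (\<forall>x y. Rel a x y \<longrightarrow> x \<in> X \<and> y \<in> X) \<and>
        (\<forall>x y z. x \<in> X \<and> le x y \<and> Rel a y z \<longrightarrow> (\<exists>u. Rel a x u \<and> le u z))"
  unfolding cond_frame_def by (elim conjE) assumption
lemma cf_refl: assumes "cond_frame X le Rel" "x \<in> X" shows "le x x"
  using cf_refl0[OF assms(1)] assms(2) by blast
lemma cf_trans: assumes "cond_frame X le Rel" "x \<in> X" "y \<in> X" "z \<in> X" "le x y" "le y z" shows "le x z"
  using cf_trans0[OF assms(1)] assms(2-) by blast
lemma cf_RX: assumes "cond_frame X le Rel" "upset X le a" "Rel a x y" shows "x \<in> X \<and> y \<in> X"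
  using cf_up0[OF assms(1)] assms(2-) by blast
lemma cf_mono: assumes "cond_frame X le Rel" "upset X le a" "x \<in> X" "le x y" "Rel a y z" shows "\<exists>u. Rel a x u \<and> le u z"
  using cf_up0[OF assms(1)] assms(2-) by blast
lemma uc_cf: "UC_frame X le Rel \<Longrightarrow> cond_frame X le Rel"
  unfolding UC_frame_def by (erule conjE)
lemma uc_up0: "UC_frame X le Rel \<Longrightarrow> \<forall>a. upset X le a \<longrightarrow>
        (\<forall>x\<in>X. \<forall>y\<in>X. Rel a x y \<longrightarrow> le x y) \<and>
        (\<forall>x\<in>X. \<forall>y\<in>X. (\<exists>u. Rel a x u \<and> le u y) \<longrightarrow> (\<exists>u. Rel a y u \<and> le u y))"
  unfolding UC_frame_def by (erule conjE)
lemma uc_inc: assumes "UC_frame X le Rel" "upset X le a" "x \<in> X" "Rel a x y" shows "le x y \<and> y \<in> X"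
proof -
  have y: "y \<in> X" using cf_RX[OF uc_cf[OF assms(1)] assms(2) assms(4)] by blast
  show ?thesis using uc_up0[OF assms(1)] assms(2-) y by blast
qed
lemma uc_back: assumes "UC_frame X le Rel" "upset X le a" "x \<in> X" "y \<in> X" "Rel a x u" "le u y" shows "\<exists>u. Rel a y u \<and> le u y"
  using uc_up0[OF assms(1)] assms(2-) by blast

lemma persist:
  assumes cf: "cond_frame X le Rel" and V: "\<forall>n. upset X le (V n)"
  shows "x \<in> X \<Longrightarrow> y \<in> X \<Longrightarrow> le x y \<Longrightarrow> sat X le Rel V x phi \<Longrightarrow> sat X le Rel V y phi"
proof (induction phi arbitrary: x y)
  case (Atom n) then show ?case using V by (auto simp: upset_def)
next
  case Bot then show ?case by simp
next
  case (And a b) then show ?case by auto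
next
  case (Or a b) then show ?case by auto
next
  case (Imp a b)
  show ?case
  proof (simp only: sat.simps, intro ballI impI)
    fix z assume z: "z \<in> X" "le y z" "sat X le Rel V z a"
    have "le x z" using cf_trans[OF cf _ _ _ _ z(2)] Imp.prems z by blast
    then show "sat X le Rel V z b" using Imp.prems(4) z by simp
  qed
next
  case (Cond a b)
  let ?A = "{z\<in>X. sat X le Rel V z a}"
  have up: "upset X le ?A" unfolding upset_def using Cond.IH(1) by auto
  note fr = cf_RX[OF cf up] cf_mono[OF cf up]
  show ?case
  proof (simp only: sat.simps, intro allI impI)
    fix z assume "Rel ?A y z"
    then obtain u where u: "Rel ?A x u" "le u z" using fr(2)[OF Cond.prems(1) Cond.prems(3)] by blast
    have "u \<in> X" "z \<in> X" using fr(1)[OF u(1)] fr(1)[OF \<open>Rel ?A y z\<close>] by blast+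
    moreover have "sat X le Rel V u b" using Cond.prems(4) u by simp
    ultimately show "sat X le Rel V z b" using Cond.IH(2) u by blast
  qed
qed

lemma tset_upset:
  assumes cf: "cond_frame X le Rel" and V: "\<forall>n. upset X le (V n)"
  shows "upset X le {z\<in>X. sat X le Rel V z phi}"
  unfolding upset_def using persist[OF cf V] by auto

lemma subst_sat:
  assumes cf: "cond_frame X le Rel" and V: "\<forall>n. upset X le (V n)"
  shows "x \<in> X \<Longrightarrow> sat X le Rel V x (subst s phi) = sat X le Rel (\<lambda>n. {z\<in>X. sat X le Rel V z (s n)}) x phi"
proof (induction phi arbitrary: x)
  case (Cond a b)
  let ?A = "{z\<in>X. sat X le Rel V z (subst s a)}"
  have eq: "?A = {z\<in>X. sat X le Rel (\<lambda>n. {z\<in>X. sat X le Rel V z (s n)}) z a}"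
    using Cond.IH(1) by auto
  have up: "upset X le ?A" by (rule tset_upset[OF cf V])
  have fr: "\<forall>x y. Rel ?A x y \<longrightarrow> x \<in> X \<and> y \<in> X"
    using cf_RX[OF cf up] by blast
  show ?case
    unfolding subst.simps sat.simps eq[symmetric]
    using Cond.IH(2) fr by blast
next
  case (Imp a b)
  show ?case unfolding subst.simps sat.simps using Imp.IH by blast
qed simp_all


lemma validD: "valid_frame X le Rel phi \<Longrightarrow> \<forall>n. upset X le (V n) \<Longrightarrow> x \<in> X \<Longrightarrow> sat X le Rel V x phi"
  unfolding valid_frame_def by blast
lemma validI: "(\<And>V x. \<forall>n. upset X le (V n) \<Longrightarrow> x \<in> X \<Longrightarrow> sat X le Rel V x phi) \<Longrightarrow> valid_frame X le Rel phi"
  unfolding valid_frame_def by blast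

lemma sound_ick:
  assumes cf: "cond_frame X le Rel"
  shows "phi \<in> ICK G \<Longrightarrow> (\<forall>g\<in>G. valid_frame X le Rel g) \<Longrightarrow> valid_frame X le Rel phi"
proof (induction phi rule: ICK.induct)
  case (ipc1 a b)
  show ?case
  proof (rule validI)
    fix V x assume V: "\<forall>n::nat. upset X le (V n)" and x: "x \<in> X"
    show "sat X le Rel V x (Imp a (Imp b a))"
    proof (unfold sat.simps(5), intro ballI impI)
      fix y z assume "y \<in> X" "le x y" "sat X le Rel V y a" "z \<in> X" "le y z" "sat X le Rel V z b"
      then show "sat X le Rel V z a" using persist[OF cf V] by blast
    qed
  qed
next
  case (ipc2 a b c)
  show ?case
  proof (rule validI)
    fix V x assume V: "\<forall>n::nat. upset X le (V n)" and x: "x \<in> X"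
    show "sat X le Rel V x (Imp (Imp a (Imp b c)) (Imp (Imp a b) (Imp a c)))"
    proof (unfold sat.simps(5), intro ballI impI)
      fix y z w assume y: "y \<in> X" "le x y" "\<forall>u\<in>X. le y u \<longrightarrow> sat X le Rel V u a \<longrightarrow> (\<forall>v\<in>X. le u v \<longrightarrow> sat X le Rel V v b \<longrightarrow> sat X le Rel V v c)"
        and z: "z \<in> X" "le y z" "\<forall>u\<in>X. le z u \<longrightarrow> sat X le Rel V u a \<longrightarrow> sat X le Rel V u b"
        and w: "w \<in> X" "le z w" "sat X le Rel V w a"
      have yw: "le y w" using cf_trans[OF cf y(1) z(1) w(1) z(2) w(2)] .
      have ww: "le w w" using cf_refl[OF cf w(1)] .
      have "sat X le Rel V w b" using z(3) w ww by blast
      then show "sat X le Rel V w c" using y(3) yw w ww by blast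
    qed
  qed
next
  case (ipc3 a b)
  show ?case by (rule validI) simp
next
  case (ipc4 a b)
  show ?case by (rule validI) simp
next
  case (ipc5 a b)
  show ?case
  proof (rule validI)
    fix V x assume V: "\<forall>n::nat. upset X le (V n)" and x: "x \<in> X"
    show "sat X le Rel V x (Imp a (Imp b (And a b)))"
    proof (unfold sat.simps(5) sat.simps(3), intro ballI impI conjI)
      fix y z assume "y \<in> X" "le x y" "sat X le Rel V y a" "z \<in> X" "le y z" "sat X le Rel V z b"
      then show "sat X le Rel V z a" "sat X le Rel V z b" using persist[OF cf V] by blast+
    qed
  qed
next
  case (ipc6 a b)
  show ?case by (rule validI) simp
next
  case (ipc7 a b)
  show ?case by (rule validI) simp
next
  case (ipc8 a c b)
  show ?case
  proof (rule validI)
    fix V x assume V: "\<forall>n::nat. upset X le (V n)" and x: "x \<in> X"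
    show "sat X le Rel V x (Imp (Imp a c) (Imp (Imp b c) (Imp (Or a b) c)))"
    proof (unfold sat.simps(5), intro ballI impI)
      fix y z w assume y: "y \<in> X" "le x y" "\<forall>u\<in>X. le y u \<longrightarrow> sat X le Rel V u a \<longrightarrow> sat X le Rel V u c"
        and z: "z \<in> X" "le y z" "\<forall>u\<in>X. le z u \<longrightarrow> sat X le Rel V u b \<longrightarrow> sat X le Rel V u c"
        and w: "w \<in> X" "le z w" "sat X le Rel V w (Or a b)"
      have yw: "le y w" using cf_trans[OF cf y(1) z(1) w(1) z(2) w(2)] .
      show "sat X le Rel V w c" using y(3) z(3) w yw by auto
    qed
  qed
next
  case (ipc9 a)
  show ?case by (rule validI) simp
next
  case (gam g)
  then show ?case by blast
next
  case ax_and
  show ?case unfolding Iff_def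
    by (rule validI) (unfold sat.simps(3) sat.simps(5) sat.simps(6), blast)
next
  case ax_top
  show ?case unfolding Iff_def Top_def by (rule validI) simp
next
  case (sub a s)
  show ?case
  proof (rule validI)
    fix V x assume V: "\<forall>n::nat. upset X le (V n)" and x: "x \<in> X"
    have V': "\<forall>n. upset X le {z\<in>X. sat X le Rel V z (s n)}" using tset_upset[OF cf V] by blast
    have "valid_frame X le Rel a" using sub by blast
    from validD[OF this V' x]
    show "sat X le Rel V x (subst s a)" using subst_sat[OF cf V x] by simp
  qed
next
  case (mp a b)
  have v: "valid_frame X le Rel (Imp a b)" "valid_frame X le Rel a" using mp by blast+
  show ?case
  proof (rule validI)
    fix V x assume V: "\<forall>n::nat. upset X le (V n)" and x: "x \<in> X"
    have "sat X le Rel V x (Imp a b)" "sat X le Rel V x a" using validD[OF v(1) V x] validD[OF v(2) V x] .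
    then show "sat X le Rel V x b" using x cf_refl[OF cf x] by simp
  qed
next
  case (cong_l a b c)
  have v: "valid_frame X le Rel (Iff a b)" using cong_l by blast
  show ?case
  proof (rule validI)
    fix V x assume V: "\<forall>n::nat. upset X le (V n)" and x: "x \<in> X"
    have "\<forall>z\<in>X. sat X le Rel V z a = sat X le Rel V z b"
    proof
      fix z assume z: "z \<in> X"
      have "sat X le Rel V z (Iff a b)" using validD[OF v V z] .
      then show "sat X le Rel V z a = sat X le Rel V z b" unfolding Iff_def using z cf_refl[OF cf z] by (simp only: sat.simps) blast
    qed
    then have "{z\<in>X. sat X le Rel V z a} = {z\<in>X. sat X le Rel V z b}" by blast
    then show "sat X le Rel V x (Iff (Cond a c) (Cond b c))" unfolding Iff_def by simp
  qed
next
  case (cong_r a b c)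
  have v: "valid_frame X le Rel (Iff a b)" using cong_r by blast
  show ?case
  proof (rule validI)
    fix V x assume V: "\<forall>n::nat. upset X le (V n)" and x: "x \<in> X"
    have eq: "\<forall>z\<in>X. sat X le Rel V z a = sat X le Rel V z b"
    proof
      fix z assume z: "z \<in> X"
      have "sat X le Rel V z (Iff a b)" using validD[OF v V z] .
      then show "sat X le Rel V z a = sat X le Rel V z b" unfolding Iff_def using z cf_refl[OF cf z] by (simp only: sat.simps) blast
    qed
    have up: "upset X le {z\<in>X. sat X le Rel V z c}" using tset_upset[OF cf V] .
    have "\<forall>y. sat X le Rel V y (Cond c a) = sat X le Rel V y (Cond c b)"
    proof
      fix y
      show "sat X le Rel V y (Cond c a) = sat X le Rel V y (Cond c b)"
        unfolding sat.simps(6) using eq cf_RX[OF cf up] by blast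
    qed
    then show "sat X le Rel V x (Iff (Cond c a) (Cond c b))" unfolding Iff_def by simp
  qed
qed

lemma sound_ax1:
  assumes uc: "UC_frame X le Rel"
  shows "valid_frame X le Rel (Imp Q (Cond P Q))"
proof (rule validI)
  fix V x assume V: "\<forall>n::nat. upset X le (V n)" and x: "x \<in> X"
  have cf: "cond_frame X le Rel" using uc_cf[OF uc] .
  let ?A = "{z\<in>X. sat X le Rel V z P}"
  have up: "upset X le ?A" using tset_upset[OF cf V] .
  show "sat X le Rel V x (Imp Q (Cond P Q))"
  proof (unfold sat.simps(5) sat.simps(6), intro ballI impI allI)
    fix y z assume y: "y \<in> X" "le x y" "sat X le Rel V y Q" and z: "Rel ?A y z"
    have "le y z \<and> z \<in> X" using uc_inc[OF uc up y(1) z] .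
    then show "sat X le Rel V z Q" using persist[OF cf V y(1)] y(3) by blast
  qed
qed

lemma sound_ax2:
  assumes uc: "UC_frame X le Rel"
  shows "valid_frame X le Rel (Cond P (Imp (Cond P Q) Q))"
proof (rule validI)
  fix V x assume V: "\<forall>n::nat. upset X le (V n)" and x: "x \<in> X"
  have cf: "cond_frame X le Rel" using uc_cf[OF uc] .
  let ?A = "{z\<in>X. sat X le Rel V z P}"
  have up: "upset X le ?A" using tset_upset[OF cf V] .
  show "sat X le Rel V x (Cond P (Imp (Cond P Q) Q))"
  proof (unfold sat.simps(5) sat.simps(6), intro ballI impI allI)
    fix y z assume y: "Rel ?A x y" and z: "z \<in> X" "le y z" and zc: "\<forall>u. Rel ?A z u \<longrightarrow> sat X le Rel V u Q"
    obtain u where u: "Rel ?A z u" "le u z" using uc_back[OF uc up x z(1) y z(2)] by blast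
    have "sat X le Rel V u Q" using zc u by blast
    moreover have "u \<in> X" using cf_RX[OF cf up u(1)] by blast
    ultimately show "sat X le Rel V z Q" using persist[OF cf V] u z by blast
  qed
qed

lemma soundness:
  assumes uc: "UC_frame X le Rel"
  shows "phi \<in> sCond_ACL_UC \<Longrightarrow> valid_frame X le Rel phi"
proof -
  assume "phi \<in> sCond_ACL_UC"
  then have "phi \<in> ICK {Imp Q (Cond P Q), Cond P (Imp (Cond P Q) Q)}" unfolding sCond_ACL_UC_def .
  moreover have "\<forall>g\<in>{Imp Q (Cond P Q), Cond P (Imp (Cond P Q) Q)}. valid_frame X le Rel g"
    using sound_ax1[OF uc] sound_ax2[OF uc] by blast
  ultimately show ?thesis by (rule sound_ick[OF uc_cf[OF uc]])
qed


section \<open>Completeness\<close>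

abbreviation LL where "LL \<equiv> sCond_ACL_UC"

lemma L_ipc1: "Imp a (Imp b a) \<in> LL" unfolding sCond_ACL_UC_def by (rule ICK.ipc1)
lemma L_ipc2: "Imp (Imp a (Imp b c)) (Imp (Imp a b) (Imp a c)) \<in> LL" unfolding sCond_ACL_UC_def by (rule ICK.ipc2)
lemma L_ipc3: "Imp (And a b) a \<in> LL" unfolding sCond_ACL_UC_def by (rule ICK.ipc3)
lemma L_ipc4: "Imp (And a b) b \<in> LL" unfolding sCond_ACL_UC_def by (rule ICK.ipc4)
lemma L_ipc5: "Imp a (Imp b (And a b)) \<in> LL" unfolding sCond_ACL_UC_def by (rule ICK.ipc5)
lemma L_ipc6: "Imp a (Or a b) \<in> LL" unfolding sCond_ACL_UC_def by (rule ICK.ipc6)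
lemma L_ipc7: "Imp b (Or a b) \<in> LL" unfolding sCond_ACL_UC_def by (rule ICK.ipc7)
lemma L_ipc8: "Imp (Imp a c) (Imp (Imp b c) (Imp (Or a b) c)) \<in> LL" unfolding sCond_ACL_UC_def by (rule ICK.ipc8)
lemma L_ipc9: "Imp Bot a \<in> LL" unfolding sCond_ACL_UC_def by (rule ICK.ipc9)
lemma L_mp: "Imp a b \<in> LL \<Longrightarrow> a \<in> LL \<Longrightarrow> b \<in> LL" unfolding sCond_ACL_UC_def by (rule ICK.mp)
lemma L_sub: "a \<in> LL \<Longrightarrow> subst s a \<in> LL" unfolding sCond_ACL_UC_def by (rule ICK.sub)
lemma L_cong_l: "Iff a b \<in> LL \<Longrightarrow> Iff (Cond a c) (Cond b c) \<in> LL" unfolding sCond_ACL_UC_def by (rule ICK.cong_l)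
lemma L_cong_r: "Iff a b \<in> LL \<Longrightarrow> Iff (Cond c a) (Cond c b) \<in> LL" unfolding sCond_ACL_UC_def by (rule ICK.cong_r)
lemma L_ax_and0: "Iff (Cond P (And Q R)) (And (Cond P Q) (Cond P R)) \<in> LL" unfolding sCond_ACL_UC_def by (rule ICK.ax_and)
lemma L_ax1_0: "Imp Q (Cond P Q) \<in> LL" unfolding sCond_ACL_UC_def by (rule ICK.gam) simp
lemma L_ax2_0: "Cond P (Imp (Cond P Q) Q) \<in> LL" unfolding sCond_ACL_UC_def by (rule ICK.gam) simp

lemma subst_Iff: "subst s (Iff a b) = Iff (subst s a) (subst s b)" by (simp add: Iff_def)

lemma L_ax_and: "Iff (Cond c (And a b)) (And (Cond c a) (Cond c b)) \<in> LL"
proof -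
  have "subst (\<lambda>n. if n = 0 then c else if n = 1 then a else b) (Iff (Cond P (And Q R)) (And (Cond P Q) (Cond P R))) \<in> LL"
    by (rule L_sub[OF L_ax_and0])
  then show ?thesis by (simp add: subst_Iff)
qed
lemma L_ax1: "Imp b (Cond c b) \<in> LL"
proof -
  have "subst (\<lambda>n. if n = 0 then c else b) (Imp Q (Cond P Q)) \<in> LL" by (rule L_sub[OF L_ax1_0])
  then show ?thesis by simp
qed
lemma L_ax2: "Cond c (Imp (Cond c b) b) \<in> LL"
proof -
  have "subst (\<lambda>n. if n = 0 then c else b) (Cond P (Imp (Cond P Q) Q)) \<in> LL" by (rule L_sub[OF L_ax2_0])
  then show ?thesis by simp
qed

lemma L_iffI: "Imp a b \<in> LL \<Longrightarrow> Imp b a \<in> LL \<Longrightarrow> Iff a b \<in> LL"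
  unfolding Iff_def by (rule L_mp[OF L_mp[OF L_ipc5]])
lemma L_iffD1: "Iff a b \<in> LL \<Longrightarrow> Imp a b \<in> LL"
  unfolding Iff_def by (rule L_mp[OF L_ipc3])
lemma L_iffD2: "Iff a b \<in> LL \<Longrightarrow> Imp b a \<in> LL"
  unfolding Iff_def by (rule L_mp[OF L_ipc4])
lemma L_S: "Imp a (Imp b c) \<in> LL \<Longrightarrow> Imp a b \<in> LL \<Longrightarrow> Imp a c \<in> LL"
  by (rule L_mp[OF L_mp[OF L_ipc2]])
lemma L_K: "b \<in> LL \<Longrightarrow> Imp a b \<in> LL"
  by (rule L_mp[OF L_ipc1])
lemma L_I: "Imp a a \<in> LL"
  by (rule L_S[OF L_ipc1 L_ipc1[of a a]])
lemma L_nec: "b \<in> LL \<Longrightarrow> Cond c b \<in> LL"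
  by (rule L_mp[OF L_ax1])

definition thy :: "form set \<Rightarrow> bool" where
  "thy T \<longleftrightarrow> LL \<subseteq> T \<and> (\<forall>a b. Imp a b \<in> T \<longrightarrow> a \<in> T \<longrightarrow> b \<in> T)"

definition WW :: "form set set" where
  "WW = {T. thy T \<and> Bot \<notin> T \<and> (\<forall>a b. Or a b \<in> T \<longrightarrow> a \<in> T \<or> b \<in> T)}"

lemma thyL: "thy T \<Longrightarrow> a \<in> LL \<Longrightarrow> a \<in> T" unfolding thy_def by blast
lemma thyMP: "thy T \<Longrightarrow> Imp a b \<in> T \<Longrightarrow> a \<in> T \<Longrightarrow> b \<in> T" unfolding thy_def by blast
lemma thyLMP: "thy T \<Longrightarrow> Imp a b \<in> LL \<Longrightarrow> a \<in> T \<Longrightarrow> b \<in> T" using thyL thyMP by blast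

lemma thy_LL: "thy LL" unfolding thy_def using L_mp by blast

lemma thy_imp: assumes T: "thy T" shows "thy {c. Imp a c \<in> T}" "T \<subseteq> {c. Imp a c \<in> T}" "a \<in> {c. Imp a c \<in> T}"
proof -
  show "thy {c. Imp a c \<in> T}" unfolding thy_def
  proof (intro conjI allI impI subsetI)
    fix x assume "x \<in> LL" then show "x \<in> {c. Imp a c \<in> T}" using thyL[OF T L_K] by blast
  next
    fix x y assume "Imp x y \<in> {c. Imp a c \<in> T}" "x \<in> {c. Imp a c \<in> T}"
    then show "y \<in> {c. Imp a c \<in> T}" using thyMP[OF T thyLMP[OF T L_ipc2]] by blast
  qed
  show "T \<subseteq> {c. Imp a c \<in> T}" using thyLMP[OF T L_ipc1] by blast
  show "a \<in> {c. Imp a c \<in> T}" using thyL[OF T L_I] by blast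
qed

lemma lindenbaum:
  assumes T: "thy T" and psi: "psi \<notin> T"
  shows "\<exists>D\<in>WW. T \<subseteq> D \<and> psi \<notin> D"
proof -
  let ?A = "{S. thy S \<and> T \<subseteq> S \<and> psi \<notin> S}"
  have ne: "?A \<noteq> {}" using T psi by blast
  have ch: "\<Union>C \<in> ?A" if C: "C \<noteq> {}" "subset.chain ?A C" for C
  proof -
    have CA: "C \<subseteq> ?A" and tot: "\<forall>X\<in>C. \<forall>Y\<in>C. X \<subseteq> Y \<or> Y \<subseteq> X"
      using C(2) unfolding subset_chain_def by blast+
    obtain S0 where S0: "S0 \<in> C" using C(1) by blast
    have "LL \<subseteq> \<Union>C" using S0 CA unfolding thy_def by blast
    moreover have "b \<in> \<Union>C" if hh: "Imp a b \<in> \<Union>C" "a \<in> \<Union>C" for a b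
    proof -
      obtain S1 S2 where S: "S1 \<in> C" "S2 \<in> C" "Imp a b \<in> S1" "a \<in> S2" using hh by blast
      have t1: "thy S1" "thy S2" using S CA by blast+
      show ?thesis
      proof (cases "S1 \<subseteq> S2")
        case True then show ?thesis using thyMP[OF t1(2)] S by blast
      next
        case False then have "S2 \<subseteq> S1" using tot S by blast
        then show ?thesis using thyMP[OF t1(1)] S by blast
      qed
    qed
    ultimately have "thy (\<Union>C)" unfolding thy_def by blast
    moreover have "T \<subseteq> \<Union>C" using S0 CA by blast
    moreover have "psi \<notin> \<Union>C" using CA by blast
    ultimately show ?thesis by blast
  qed
  obtain M where M: "M \<in> ?A" and max: "\<forall>X\<in>?A. M \<subseteq> X \<longrightarrow> X = M"
    using subset_Zorn_nonempty[OF ne ch] by blast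
  have tM: "thy M" and TM: "T \<subseteq> M" and pM: "psi \<notin> M" using M by blast+
  have impM: "Imp a psi \<in> M" if "a \<notin> M" for a
  proof (rule ccontr)
    assume "Imp a psi \<notin> M"
    then have "{c. Imp a c \<in> M} \<in> ?A" using thy_imp[OF tM] TM by blast
    then have "{c. Imp a c \<in> M} = M" using max thy_imp(2)[OF tM] by blast
    then show False using thy_imp(3)[OF tM, of a] that by blast
  qed
  have "Bot \<notin> M" using thyLMP[OF tM L_ipc9] pM by blast
  moreover have "a \<in> M \<or> b \<in> M" if "Or a b \<in> M" for a b
  proof (rule ccontr)
    assume "\<not> (a \<in> M \<or> b \<in> M)"
    then have "Imp a psi \<in> M" "Imp b psi \<in> M" using impM by blast+
    then have "psi \<in> M" using thyMP[OF tM thyMP[OF tM thyLMP[OF tM L_ipc8]]] that by blast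
    then show False using pM by blast
  qed
  ultimately have "M \<in> WW" unfolding WW_def using tM by blast
  then show ?thesis using TM pM by blast
qed

lemma WW_thy: "D \<in> WW \<Longrightarrow> thy D" unfolding WW_def by blast
lemma WW_bot: "D \<in> WW \<Longrightarrow> Bot \<notin> D" unfolding WW_def by blast
lemma WW_prime: "D \<in> WW \<Longrightarrow> Or a b \<in> D \<Longrightarrow> a \<in> D \<or> b \<in> D" unfolding WW_def by blast

lemma thy_and: "thy T \<Longrightarrow> And a b \<in> T \<longleftrightarrow> a \<in> T \<and> b \<in> T"
  using thyLMP[of T, OF _ L_ipc3] thyLMP[of T, OF _ L_ipc4] thyMP[of T, OF _ thyLMP[of T, OF _ L_ipc5]] by blast

lemma cond_mono: assumes T: "thy T" and ab: "Imp a b \<in> LL" and ca: "Cond c a \<in> T" shows "Cond c b \<in> T"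
proof -
  have h1: "Imp a (And a b) \<in> LL" by (rule L_S[OF L_ipc5 ab])
  have h2: "Iff a (And a b) \<in> LL" by (rule L_iffI[OF h1 L_ipc3])
  have h3: "Imp (Cond c a) (Cond c (And a b)) \<in> LL" by (rule L_iffD1[OF L_cong_r[OF h2]])
  have "Cond c (And a b) \<in> T" by (rule thyLMP[OF T h3 ca])
  then have "And (Cond c a) (Cond c b) \<in> T" by (rule thyLMP[OF T L_iffD1[OF L_ax_and]])
  then show ?thesis using thy_and[OF T] by blast
qed

lemma cond_K: assumes T: "thy T" and h: "Cond c (Imp a b) \<in> T" "Cond c a \<in> T" shows "Cond c b \<in> T"
proof -
  have "And (Cond c (Imp a b)) (Cond c a) \<in> T" using thy_and[OF T] h by blast
  then have "Cond c (And (Imp a b) a) \<in> T" by (rule thyLMP[OF T L_iffD2[OF L_ax_and]])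
  moreover have "Imp (And (Imp a b) a) b \<in> LL" by (rule L_S[OF L_ipc3 L_ipc4])
  ultimately show ?thesis using cond_mono[OF T] by blast
qed

definition tr :: "form \<Rightarrow> form set set" where "tr a = {D\<in>WW. a \<in> D}"

lemma tr_imp: assumes "tr a \<subseteq> tr b" shows "Imp a b \<in> LL"
proof (rule ccontr)
  assume "Imp a b \<notin> LL"
  then have "b \<notin> {c. Imp a c \<in> LL}" by blast
  from lindenbaum[OF thy_imp(1)[OF thy_LL] this] obtain D where
    D: "D \<in> WW" "{c. Imp a c \<in> LL} \<subseteq> D" "b \<notin> D" by blast
  have "a \<in> D" using thy_imp(3)[OF thy_LL, of a] D(2) by blast
  then have "D \<in> tr b" using assms D(1) unfolding tr_def by blast
  then show False using D(3) unfolding tr_def by blast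
qed

lemma tr_eq: "tr a = tr b \<Longrightarrow> Iff a b \<in> LL"
  using L_iffI tr_imp by (metis order_refl)

definition CRel :: "form set set \<Rightarrow> form set \<Rightarrow> form set \<Rightarrow> bool" where
  "CRel A G D \<longleftrightarrow> G \<in> WW \<and> D \<in> WW \<and> G \<subseteq> D \<and> (\<exists>phi. A = tr phi) \<and>
      (\<forall>phi psi. A = tr phi \<longrightarrow> Cond phi psi \<in> G \<longrightarrow> psi \<in> D)"

definition CV :: "nat \<Rightarrow> form set set" where "CV n = tr (Atom n)"

lemma truth: "G \<in> WW \<Longrightarrow> sat WW (\<subseteq>) CRel CV G phi \<longleftrightarrow> phi \<in> G"
proof (induction phi arbitrary: G)
  case (Atom n) then show ?case unfolding CV_def tr_def by simp
next
  case Bot then show ?case using WW_bot by simp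
next
  case (And a b) then show ?case using thy_and[OF WW_thy[OF And.prems]] by simp
next
  case (Or a b)
  have T: "thy G" using WW_thy[OF Or.prems] .
  have "Or a b \<in> G \<longleftrightarrow> a \<in> G \<or> b \<in> G"
    using WW_prime[OF Or.prems] thyLMP[OF T L_ipc6] thyLMP[OF T L_ipc7] by blast
  then show ?case using Or by simp
next
  case (Imp a b)
  have T: "thy G" using WW_thy[OF Imp.prems] .
  show ?case
  proof
    assume s: "sat WW (\<subseteq>) CRel CV G (Imp a b)"
    show "Imp a b \<in> G"
    proof (rule ccontr)
      assume "Imp a b \<notin> G"
      then have "b \<notin> {c. Imp a c \<in> G}" by blast
      from lindenbaum[OF thy_imp(1)[OF T] this] obtain D where
        D: "D \<in> WW" "{c. Imp a c \<in> G} \<subseteq> D" "b \<notin> D" by blast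
      have "a \<in> D" using thy_imp(3)[OF T, of a] D(2) by blast
      moreover have "G \<subseteq> D" using thy_imp(2)[OF T] D(2) by blast
      ultimately have "sat WW (\<subseteq>) CRel CV D b" using s D(1) Imp.IH(1)[OF D(1)] by simp
      then show False using Imp.IH(2)[OF D(1)] D(3) by blast
    qed
  next
    assume i: "Imp a b \<in> G"
    show "sat WW (\<subseteq>) CRel CV G (Imp a b)"
    proof (unfold sat.simps(5), intro ballI impI)
      fix D assume D: "D \<in> WW" "G \<subseteq> D" "sat WW (\<subseteq>) CRel CV D a"
      have "a \<in> D" using D Imp.IH(1)[OF D(1)] by blast
      then have "b \<in> D" using thyMP[OF WW_thy[OF D(1)]] i D(2) by blast
      then show "sat WW (\<subseteq>) CRel CV D b" using Imp.IH(2)[OF D(1)] by blast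
    qed
  qed
next
  case (Cond a b)
  have T: "thy G" using WW_thy[OF Cond.prems] .
  have A: "{z\<in>WW. sat WW (\<subseteq>) CRel CV z a} = tr a" unfolding tr_def using Cond.IH(1) by blast
  have "sat WW (\<subseteq>) CRel CV G (Cond a b) \<longleftrightarrow> (\<forall>D. CRel (tr a) G D \<longrightarrow> sat WW (\<subseteq>) CRel CV D b)"
    unfolding sat.simps(6) A ..
  also have "\<dots> \<longleftrightarrow> (\<forall>D. CRel (tr a) G D \<longrightarrow> b \<in> D)"
    using Cond.IH(2) unfolding CRel_def by blast
  also have "\<dots> \<longleftrightarrow> Cond a b \<in> G"
  proof
    assume "Cond a b \<in> G" then show "\<forall>D. CRel (tr a) G D \<longrightarrow> b \<in> D" unfolding CRel_def by blast
  next
    assume all: "\<forall>D. CRel (tr a) G D \<longrightarrow> b \<in> D"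
    show "Cond a b \<in> G"
    proof (rule ccontr)
      assume nb: "Cond a b \<notin> G"
      let ?S = "{c. Cond a c \<in> G}"
      have tS: "thy ?S" unfolding thy_def
      proof (intro conjI allI impI subsetI)
        fix x assume "x \<in> LL" then show "x \<in> ?S" using thyL[OF T L_nec] by blast
      next
        fix x y assume "Imp x y \<in> ?S" "x \<in> ?S"
        then show "y \<in> ?S" using cond_K[OF T] by blast
      qed
      have "b \<notin> ?S" using nb by blast
      from lindenbaum[OF tS this] obtain D where
        D: "D \<in> WW" "?S \<subseteq> D" "b \<notin> D" by blast
      have "G \<subseteq> D" using thyLMP[OF T L_ax1] D(2) by blast
      moreover have "\<forall>phi psi. tr a = tr phi \<longrightarrow> Cond phi psi \<in> G \<longrightarrow> psi \<in> D"
      proof (intro allI impI)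
        fix phi psi assume e: "tr a = tr phi" and c: "Cond phi psi \<in> G"
        have "Iff phi a \<in> LL" using tr_eq e by metis
        then have "Cond a psi \<in> G" using thyLMP[OF T L_iffD1[OF L_cong_l]] c by blast
        then show "psi \<in> D" using D(2) by blast
      qed
      ultimately have "CRel (tr a) G D" unfolding CRel_def using Cond.prems D(1) by blast
      then show False using all D(3) by blast
    qed
  qed
  finally show ?case .
qed

lemma canon_UC: assumes ne: "WW \<noteq> {}" shows "UC_frame WW (\<subseteq>) CRel"
proof -
  have cf: "cond_frame WW (\<subseteq>) CRel" unfolding cond_frame_def
  proof (intro conjI allI impI ballI)
    show "WW \<noteq> {}" by (rule ne)
  next
    fix x y z :: "form set" show "x \<subseteq> y \<Longrightarrow> y \<subseteq> z \<Longrightarrow> x \<subseteq> z" by blast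
  next
    fix A x y assume "CRel A x y" then show "x \<in> WW" "y \<in> WW" unfolding CRel_def by blast+
  next
    fix A x y z assume h: "x \<in> WW \<and> x \<subseteq> y \<and> CRel A y z"
    then have "CRel A x z" unfolding CRel_def by blast
    then show "\<exists>u. CRel A x u \<and> u \<subseteq> z" by blast
  qed simp
  show ?thesis unfolding UC_frame_def
  proof (intro conjI allI impI ballI cf)
    fix A x y assume "CRel A x y" then show "x \<subseteq> y" unfolding CRel_def by blast
  next
    fix A x y assume x: "x \<in> WW" and y: "y \<in> WW" and ex: "\<exists>u. CRel A x u \<and> u \<subseteq> y"
    then obtain u where u: "CRel A x u" "u \<subseteq> y" by blast
    have "\<forall>phi psi. A = tr phi \<longrightarrow> Cond phi psi \<in> y \<longrightarrow> psi \<in> y"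
    proof (intro allI impI)
      fix phi psi assume e: "A = tr phi" and c: "Cond phi psi \<in> y"
      have "Cond phi (Imp (Cond phi psi) psi) \<in> x" using thyL[OF WW_thy[OF x] L_ax2] .
      then have "Imp (Cond phi psi) psi \<in> y" using u e unfolding CRel_def by blast
      then show "psi \<in> y" using thyMP[OF WW_thy[OF y]] c by blast
    qed
    then have "CRel A y y" using u y unfolding CRel_def by blast
    then show "\<exists>u. CRel A y u \<and> u \<subseteq> y" by blast
  qed
qed

lemma completeness:
  assumes nL: "phi \<notin> sCond_ACL_UC"
  shows "\<exists>(X::form set set) le Rel. UC_frame X le Rel \<and> \<not> valid_frame X le Rel phi"
proof -
  from lindenbaum[OF thy_LL nL] obtain D where D: "D \<in> WW" "phi \<notin> D" by blast
  have uc: "UC_frame WW (\<subseteq>) CRel" using canon_UC D(1) by blast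
  have up: "\<forall>n. upset WW (\<subseteq>) (CV n)" unfolding upset_def CV_def tr_def by blast
  have "\<not> sat WW (\<subseteq>) CRel CV D phi" using truth[OF D(1)] D(2) by blast
  then have "\<not> valid_frame WW (\<subseteq>) CRel phi" unfolding valid_frame_def using up D(1) by blast
  then show ?thesis using uc by blast
qed

theorem theorem7p18:
  fixes phi :: form
  shows "(phi \<in> sCond_ACL_UC \<longrightarrow>
            (\<forall>(X::'w set) le Rel. UC_frame X le Rel \<longrightarrow> valid_frame X le Rel phi))
       \<and> ((\<forall>(X::form set set) le Rel. UC_frame X le Rel \<longrightarrow> valid_frame X le Rel phi)
            \<longrightarrow> phi \<in> sCond_ACL_UC)"
  using soundness completeness by blast

end
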